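(* Let $N\in\mathbb N$ and let $a=(a_0,a_1,\dots,a_N)\in\mathbb N^{N+1}$ satisfy $a_0\le a_1\le\dots\le a_N$, $a_0<a_2<a_4<\cdots$, $a_1<a_3<a_5<\cdots$, and suppose the set $\mathcal J=\{i\in[0,N]: a_i$ appears exactly once in the sequence $a\}$ is nonempty. Then $\mathcal J=\{i_0<i_1<\dots<i_\mu\}$ with $\mu\in\mathbb N$, $\mu\equiv N\pmod2$, $i_s\equiv s\pmod 2$, and $i_{s+1}=i_s+2m_s+1$ with $m_s\in\mathbb N$ for $s\in[0,\mu-1]$. Let $\mathcal E$ be the set of $b=(b_0,\dots,b_N)\in\mathbb N^{N+1}$ with $b_0<b_2<b_4<\cdots$, $b_1<b_3<b_5<\cdots$ and such that the multisets $\{b_0,\dots,b_N\}$ and $\{a_0,\dots,a_N\}$ coincide. For $b\in\mathcal E$ let $\mathring b=(b_0,b_1,b_2+1,b_3+1,b_4+2,b_5+2,\dots)$, i.e. $\mathring b_i=b_i+\lfloor i/2\rfloor$. For $X\subset[0,\mu-1]\cap2\mathbb N$ define $a^X\in\mathcal E$ by: for $s\in X$, $(a^X_{i_s},a^X_{i_s+1},a^X_{i_s+2},a^X_{i_s+3},\dots,a^X_{i_s+2m_s},a^X_{i_s+2m_s+1})=(a_{i_s+1},a_{i_s},a_{i_s+3},a_{i_s+2},\dots,a_{i_s+2m_s+1},a_{i_s+2m_s})$, and $a^X_i=a_i$ for all other $i\in[0,N]$. If $b\in\mathcal E$ is such that the multiset $\{\mathring b_0,\dots,\mathring b_N\}$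 equals the multiset $\{\mathring a_0,\dots,\mathring a_N\}$, then there exists $X\subset[0,\mu-1]\cap2\mathbb N$ with $b=a^X$. *)

theory Defs
  imports Main "HOL-Library.Multiset"
begin

text \<open>Sequences a = (a_0,...,a_N) are modelled as functions nat => nat; only
  the values at indices 0..N matter.\<close>

definition singles :: "nat \<Rightarrow> (nat \<Rightarrow> nat) \<Rightarrow> nat set" where
  "singles N a = {i. i \<le> N \<and> card {j. j \<le> N \<and> a j = a i} = 1}"

definition idx :: "nat \<Rightarrow> (nat \<Rightarrow> nat) \<Rightarrow> nat \<Rightarrow> nat" where
  "idx N a s = sorted_list_of_set (singles N a) ! s"

definition mu :: "nat \<Rightarrow> (nat \<Rightarrow> nat) \<Rightarrow> nat" where
  "mu N a = card (singles N a) - 1"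

definition strict2 :: "nat \<Rightarrow> (nat \<Rightarrow> nat) \<Rightarrow> bool" where
  "strict2 N b = (\<forall>i. i + 2 \<le> N \<longrightarrow> b i < b (i + 2))"

definition mset_seq :: "nat \<Rightarrow> (nat \<Rightarrow> nat) \<Rightarrow> nat multiset" where
  "mset_seq N b = mset (map b [0..<Suc N])"

definition inE :: "nat \<Rightarrow> (nat \<Rightarrow> nat) \<Rightarrow> (nat \<Rightarrow> nat) \<Rightarrow> bool" where
  "inE N a b = (strict2 N b \<and> mset_seq N b = mset_seq N a)"

definition ring :: "(nat \<Rightarrow> nat) \<Rightarrow> nat \<Rightarrow> nat" where
  "ring b i = b i + i div 2"

text \<open>a^X: inside each block [i_s, i_s + 2 m_s + 1] = [i_s, i_(s+1)] with s in X,
  consecutive pairs (i_s+2k, i_s+2k+1) are swapped; elsewhere a^X_i = a_i.\<close>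
definition aX :: "nat \<Rightarrow> (nat \<Rightarrow> nat) \<Rightarrow> nat set \<Rightarrow> nat \<Rightarrow> nat" where
  "aX N a X i =
    (if \<exists>s\<in>X. idx N a s \<le> i \<and> i \<le> idx N a (Suc s) \<and> even (i - idx N a s) then a (Suc i)
     else if \<exists>s\<in>X. idx N a s \<le> i \<and> i \<le> idx N a (Suc s) \<and> odd (i - idx N a s) then a (i - 1)
     else a i)"

end

theory Submission
  imports Defs
begin


context
  fixes N :: nat and a :: "nat \<Rightarrow> nat"
  assumes mono: "\<forall>i < N. a i \<le> a (Suc i)"
    and str: "strict2 N a"
begin

lemma mono_le: "i \<le> j \<Longrightarrow> j \<le> N \<Longrightarrow> a i \<le> a j"
proof (induction j)
  case 0 then show ?case by simp
next
  case (Suc j)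
  show ?case
  proof (cases "i \<le> j")
    case True
    then have "a i \<le> a j" using Suc by simp
    also have "a j \<le> a (Suc j)" using mono Suc by simp
    finally show ?thesis .
  next
    case False then have "i = Suc j" using Suc by simp
    then show ?thesis by simp
  qed
qed

lemma mono_lt: "i + 2 \<le> j \<Longrightarrow> j \<le> N \<Longrightarrow> a i < a j"
proof -
  assume h: "i + 2 \<le> j" "j \<le> N"
  have "a i < a (i+2)" using str h unfolding strict2_def by simp
  also have "a (i+2) \<le> a j" using mono_le h by simp
  finally show ?thesis .
qed

lemma eq_adj: "i \<le> N \<Longrightarrow> j \<le> N \<Longrightarrow> a j = a i \<Longrightarrow> j \<noteq> i \<Longrightarrow> j = Suc i \<or> i = Suc j"
proof (rule ccontr)
  assume h: "i \<le> N" "j \<le> N" "a j = a i" "j \<noteq> i" "\<not> (j = Suc i \<or> i = Suc j)"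
  then have "i + 2 \<le> j \<or> j + 2 \<le> i" by arith
  then show False using mono_lt h by fastforce
qed

lemma single_iff: "i \<le> N \<Longrightarrow> i \<in> singles N a \<longleftrightarrow> (\<forall>j \<le> N. a j = a i \<longrightarrow> j = i)"
proof -
  assume i: "i \<le> N"
  have fin: "finite {j. j \<le> N \<and> a j = a i}" by simp
  have mem: "i \<in> {j. j \<le> N \<and> a j = a i}" using i by simp
  have "card {j. j \<le> N \<and> a j = a i} = 1 \<longleftrightarrow> {j. j \<le> N \<and> a j = a i} = {i}"
    using fin mem by (metis card_1_singletonE card.empty card_insert_disjoint empty_iff finite.emptyI insert_absorb singletonD zero_neq_one One_nat_def is_singletonI' is_singleton_altdef)
  then show ?thesis using i unfolding singles_def by auto
qed

lemma nonsingle: "i \<le> N \<Longrightarrow> i \<notin> singles N a \<Longrightarrow> (0 < i \<and> a (i - 1) = a i) \<or> (i < N \<and> a i = a (Suc i))"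
proof -
  assume i: "i \<le> N" "i \<notin> singles N a"
  then obtain j where j: "j \<le> N" "a j = a i" "j \<noteq> i" using single_iff by blast
  then have "j = Suc i \<or> i = Suc j" using eq_adj i by blast
  then show ?thesis using j by auto
qed

lemma single_nb: "i \<in> singles N a \<Longrightarrow> i \<le> N \<and> (0 < i \<longrightarrow> a (i - 1) < a i) \<and> (i < N \<longrightarrow> a i < a (Suc i))"
proof -
  assume s: "i \<in> singles N a"
  then have i: "i \<le> N" unfolding singles_def by simp
  have "0 < i \<Longrightarrow> a (i - 1) \<noteq> a i"
  proof
    assume "0 < i" "a (i - 1) = a i"
    moreover have "i - 1 \<le> N" using i by simp
    ultimately show False using single_iff[OF i] s by fastforce
  qed
  moreover have "0 < i \<Longrightarrow> a (i - 1) \<le> a i" using mono_le i by simp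
  moreover have "i < N \<Longrightarrow> a i \<noteq> a (Suc i)"
  proof
    assume "i < N" "a i = a (Suc i)"
    then show False using single_iff[OF i] s by (metis Suc_leI n_not_Suc_n)
  qed
  moreover have "i < N \<Longrightarrow> a i \<le> a (Suc i)" using mono by simp
  ultimately show ?thesis using i by fastforce
qed

end



context
  fixes N :: nat and a :: "nat \<Rightarrow> nat"
  assumes mono: "\<forall>i < N. a i \<le> a (Suc i)"
    and str: "strict2 N a"
begin

lemma par_aux: "even (y::nat) \<Longrightarrow> x + y = i \<Longrightarrow> x mod 2 = i mod 2" by presburger

definition cut :: "nat \<Rightarrow> bool" where
  "cut i = (i = 0 \<or> i = Suc N \<or> (0 < i \<and> i \<le> N \<and> a (i - 1) \<noteq> a i))"

lemma cut_even: "i \<le> Suc N \<Longrightarrow> cut i \<Longrightarrow> even (card {j. j < i \<and> j \<notin> singles N a})"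
proof (induction i rule: less_induct)
  case (less i)
  show ?case
  proof (cases "i = 0")
    case True then show ?thesis by simp
  next
    case False
    then obtain k where k: "i = Suc k" by (cases i) auto
    have kN: "k \<le> N" using less k by simp
    show ?thesis
    proof (cases "k \<in> singles N a")
      case True
      have "{j. j < i \<and> j \<notin> singles N a} = {j. j < k \<and> j \<notin> singles N a}"
        using True k by (auto simp: less_Suc_eq)
      moreover have "cut k"
        using single_nb[OF mono str True] unfolding cut_def by auto
      ultimately show ?thesis using less k by simp
    next
      case False
      have "(0 < k \<and> a (k - 1) = a k) \<or> (k < N \<and> a k = a (Suc k))"
        using nonsingle[OF mono str kN False] .
      moreover have "\<not> (k < N \<and> a k = a (Suc k))" using less(3) k unfolding cut_def by auto
      ultimately have h: "0 < k" "a (k - 1) = a k" by auto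
      then obtain l where l: "k = Suc l" by (cases k) auto
      have lS: "l \<notin> singles N a" using single_iff[OF mono str] h l kN by fastforce
      have "{j. j < i \<and> j \<notin> singles N a} = insert k (insert l {j. j < l \<and> j \<notin> singles N a})"
        using False lS k l by (auto simp: less_Suc_eq)
      then have c: "card {j. j < i \<and> j \<notin> singles N a} = Suc (Suc (card {j. j < l \<and> j \<notin> singles N a}))"
        using l by simp
      have "cut l"
      proof -
        have "l = 0 \<or> (0 < l \<and> l \<le> N \<and> a (l - 1) \<noteq> a l)"
        proof (cases l)
          case (Suc m)
          have "a m < a k" using mono_lt[OF mono str, of m k] Suc l kN by simp
          then show ?thesis using Suc l h kN by auto
        qed simp
        then show ?thesis unfolding cut_def by auto
      qed
      then show ?thesis using less k l c by simp
    qed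
  qed
qed

lemma card_split: "card {x \<in> singles N a. x < i} + card {j. j < i \<and> j \<notin> singles N a} = i"
proof -
  have "{x \<in> singles N a. x < i} \<union> {j. j < i \<and> j \<notin> singles N a} = {..<i}" by auto
  moreover have "{x \<in> singles N a. x < i} \<inter> {j. j < i \<and> j \<notin> singles N a} = {}" by auto
  ultimately show ?thesis
    by (metis (no_types, lifting) card_Un_disjoint card_lessThan finite_Un finite_lessThan)
qed

lemma single_parity: "i \<in> singles N a \<Longrightarrow> card {x \<in> singles N a. x < i} mod 2 = i mod 2"
proof -
  assume s: "i \<in> singles N a"
  have "cut i" using single_nb[OF mono str s] unfolding cut_def by auto
  moreover have "i \<le> Suc N" using s unfolding singles_def by simp
  ultimately have "even (card {j. j < i \<and> j \<notin> singles N a})" using cut_even by blast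
  then show ?thesis using card_split[of i] par_aux by blast
qed

lemma singles_fin: "finite (singles N a)"
  unfolding singles_def by simp

lemma card_parity: "card (singles N a) mod 2 = Suc N mod 2"
proof -
  have "cut (Suc N)" unfolding cut_def by simp
  then have "even (card {j. j < Suc N \<and> j \<notin> singles N a})" using cut_even by blast
  moreover have "{x \<in> singles N a. x < Suc N} = singles N a" unfolding singles_def by auto
  ultimately show ?thesis using card_split[of "Suc N"] par_aux by metis
qed

end



context
  fixes S :: "nat set"
  assumes fin: "finite S" and ne: "S \<noteq> {}"
begin

abbreviation "xs \<equiv> sorted_list_of_set S"

lemma len: "length xs = Suc (card S - 1)"
  using fin ne by (simp add: card_gt_0_iff)

lemma nth_in: "s \<le> card S - 1 \<Longrightarrow> xs ! s \<in> S"
  using len fin by (metis le_imp_less_Suc nth_mem set_sorted_list_of_set)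

lemma nth_mono: "s < t \<Longrightarrow> t \<le> card S - 1 \<Longrightarrow> xs ! s < xs ! t"
  using len sorted_wrt_nth_less[OF strict_sorted_list_of_set, of s t S] by simp

lemma nth_mono_iff: "s \<le> card S - 1 \<Longrightarrow> t \<le> card S - 1 \<Longrightarrow> xs ! s < xs ! t \<longleftrightarrow> s < t"
proof
  assume "xs ! s < xs ! t" "s \<le> card S - 1" "t \<le> card S - 1"
  then show "s < t" using nth_mono[of t s] by (cases "t < s") (auto simp: linorder_not_less le_eq_less_or_eq)
qed (rule nth_mono)

lemma in_nth: "x \<in> S \<Longrightarrow> \<exists>s \<le> card S - 1. xs ! s = x"
  using len fin by (metis in_set_conv_nth less_Suc_eq_le set_sorted_list_of_set)

lemma le_last: "x \<in> S \<Longrightarrow> x \<le> xs ! (card S - 1)"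
proof -
  assume "x \<in> S"
  then obtain s where s: "s \<le> card S - 1" "xs ! s = x" using in_nth by blast
  show ?thesis
  proof (cases "s = card S - 1")
    case False then show ?thesis using s nth_mono[of s "card S - 1"] by simp
  qed (use s in simp)
qed

lemma next_le: "s < card S - 1 \<Longrightarrow> x \<in> S \<Longrightarrow> xs ! s < x \<Longrightarrow> xs ! Suc s \<le> x"
proof -
  assume h: "s < card S - 1" "x \<in> S" "xs ! s < x"
  obtain t where t: "t \<le> card S - 1" "xs ! t = x" using in_nth h by blast
  then have "s < t" using nth_mono_iff[of s t] h by simp
  then have "Suc s \<le> t" by simp
  then show ?thesis
  proof (cases "Suc s = t")
    case False then show ?thesis using t nth_mono[of "Suc s" t] \<open>Suc s \<le> t\<close> by simp
  qed (use t in simp)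
qed

lemma card_below: "s \<le> card S - 1 \<Longrightarrow> card {x \<in> S. x < xs ! s} = s"
proof -
  assume s: "s \<le> card S - 1"
  have "{x \<in> S. x < xs ! s} = (\<lambda>t. xs ! t) ` {..<s}"
  proof
    show "{x \<in> S. x < xs ! s} \<subseteq> (\<lambda>t. xs ! t) ` {..<s}"
    proof
      fix x assume "x \<in> {x \<in> S. x < xs ! s}"
      then obtain t where "t \<le> card S - 1" "xs ! t = x" "x < xs ! s" using in_nth by blast
      then show "x \<in> (\<lambda>t. xs ! t) ` {..<s}" using nth_mono_iff s by auto
    qed
  next
    show "(\<lambda>t. xs ! t) ` {..<s} \<subseteq> {x \<in> S. x < xs ! s}"
      using nth_in nth_mono s by auto
  qed
  moreover have "inj_on (\<lambda>t. xs ! t) {..<s}"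
  proof (rule inj_onI)
    fix u v assume uv: "u \<in> {..<s}" "v \<in> {..<s}" "xs ! u = xs ! v"
    then have "u \<le> card S - 1" "v \<le> card S - 1" using s by auto
    then show "u = v" using nth_mono_iff[of u v] nth_mono_iff[of v u] uv(3) by (metis less_irrefl linorder_neq_iff)
  qed
  ultimately show ?thesis by (simp add: card_image)
qed

end



context
  fixes N :: nat and a :: "nat \<Rightarrow> nat"
  assumes mono: "\<forall>i < N. a i \<le> a (Suc i)"
    and str: "strict2 N a"
    and ne: "singles N a \<noteq> {}"
begin

lemma fS: "finite (singles N a)" by (rule singles_fin[OF mono str])

lemma idx_in: "s \<le> mu N a \<Longrightarrow> idx N a s \<in> singles N a"
  unfolding idx_def mu_def using nth_in[OF fS ne] by blast

lemma idx_le: "s \<le> mu N a \<Longrightarrow> idx N a s \<le> N"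
  using idx_in unfolding singles_def by blast

lemma idx_mono: "s < t \<Longrightarrow> t \<le> mu N a \<Longrightarrow> idx N a s < idx N a t"
  unfolding idx_def mu_def using nth_mono[OF fS ne] by blast

lemma idx_ex: "x \<in> singles N a \<Longrightarrow> \<exists>s \<le> mu N a. idx N a s = x"
  unfolding idx_def mu_def using in_nth[OF fS ne] by blast

lemma idx_last: "x \<in> singles N a \<Longrightarrow> x \<le> idx N a (mu N a)"
  unfolding idx_def mu_def using le_last[OF fS ne] by blast

lemma idx_next: "s < mu N a \<Longrightarrow> x \<in> singles N a \<Longrightarrow> idx N a s < x \<Longrightarrow> idx N a (Suc s) \<le> x"
  unfolding idx_def mu_def using next_le[OF fS ne] by blast

lemma idx_par: "s \<le> mu N a \<Longrightarrow> idx N a s mod 2 = s mod 2"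
proof -
  assume s: "s \<le> mu N a"
  have "card {x \<in> singles N a. x < idx N a s} = s"
    using card_below[OF fS ne] s unfolding idx_def mu_def by blast
  then show ?thesis using single_parity[OF mono str idx_in[OF s]] by simp
qed

lemma mu_par: "mu N a mod 2 = N mod 2"
proof -
  have "card (singles N a) > 0" using fS ne by (simp add: card_gt_0_iff)
  moreover have "card (singles N a) mod 2 = Suc N mod 2" using card_parity[OF mono str] .
  ultimately show ?thesis unfolding mu_def
    by (cases "card (singles N a)") (simp_all add: mod_Suc split: if_splits)
qed

lemma idx_gap: "s < mu N a \<Longrightarrow> \<exists>m::nat. idx N a (Suc s) = idx N a s + 2 * m + 1"
proof -
  assume s: "s < mu N a"
  have lt: "idx N a s < idx N a (Suc s)" using idx_mono s by simp
  have p1: "idx N a s mod 2 = s mod 2" using idx_par s by simp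
  have p2: "idx N a (Suc s) mod 2 = Suc s mod 2" using idx_par s by simp
  define d where "d = idx N a (Suc s) - idx N a s"
  have e: "idx N a (Suc s) = idx N a s + d" using lt d_def by simp
  have "odd d"
  proof
    assume "even d"
    then have "idx N a (Suc s) mod 2 = idx N a s mod 2" using e by (auto elim!: evenE)
    then have "Suc s mod 2 = s mod 2" using p1 p2 by simp
    then show False by presburger
  qed
  then obtain m where "d = 2 * m + 1" using oddE by blast
  then show ?thesis using e by auto
qed

lemma nonsingle_between: "s < mu N a \<Longrightarrow> idx N a s < x \<Longrightarrow> x < idx N a (Suc s) \<Longrightarrow> x \<notin> singles N a"
proof
  assume "s < mu N a" "idx N a s < x" "x < idx N a (Suc s)" "x \<in> singles N a"
  then show False using idx_next[of s x] by simp
qed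

end



definition ms :: "(nat \<Rightarrow> nat) \<Rightarrow> nat set \<Rightarrow> nat multiset" where
  "ms f A = image_mset f (mset_set A)"

lemma ms_remove: "finite A \<Longrightarrow> x \<in> A \<Longrightarrow> ms f A = add_mset (f x) (ms f (A - {x}))"
  unfolding ms_def by (metis image_mset_add_mset mset_set.remove)

lemma ms_mem: "finite A \<Longrightarrow> v \<in># ms f A \<longleftrightarrow> (\<exists>x\<in>A. f x = v)"
  unfolding ms_def by auto

lemma mset_seq_ms: "mset_seq N f = ms f {0..<Suc N}"
  unfolding mset_seq_def ms_def by (simp only: mset_map mset_upt)

definition PMp :: "(nat \<Rightarrow> nat) \<Rightarrow> (nat \<Rightarrow> nat) \<Rightarrow> nat \<Rightarrow> bool" where
  "PMp a b j = ((b (2*j) = a (2*j) \<and> b (2*j+1) = a (2*j+1)) \<or> (b (2*j) = a (2*j+1) \<and> b (2*j+1) = a (2*j)))"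

context
  fixes N :: nat and a b :: "nat \<Rightarrow> nat"
  assumes mono: "\<forall>i < N. a i \<le> a (Suc i)"
    and str: "strict2 N a"
    and strb: "strict2 N b"
begin

lemma lowb: "v \<in># ms a {m..<Suc N} \<Longrightarrow> a m \<le> v"
proof -
  assume "v \<in># ms a {m..<Suc N}"
  then obtain x where "x \<in> {m..<Suc N}" "a x = v" using ms_mem by blast
  then show ?thesis using mono_le[OF mono str] by auto
qed

lemma step:
  assumes k: "2*k+1 \<le> N"
    and H1: "ms b {2*k..<Suc N} = ms a {2*k..<Suc N}"
    and H2: "ms (\<lambda>i. b i + i div 2) {2*k..<Suc N} = ms (\<lambda>i. a i + i div 2) {2*k..<Suc N}"
  shows "PMp a b k \<and> ms b {2*k+2..<Suc N} = ms a {2*k+2..<Suc N}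
    \<and> ms (\<lambda>i. b i + i div 2) {2*k+2..<Suc N} = ms (\<lambda>i. a i + i div 2) {2*k+2..<Suc N}"
proof -
  define A where "A = {2*k..<Suc N}"
  define rb where "rb = (\<lambda>i. b i + i div 2)"
  define ra where "ra = (\<lambda>i. a i + i div 2)"
  have fA: "finite A" unfolding A_def by simp
  have A0: "2*k \<in> A" "2*k+1 \<in> A" using k unfolding A_def by auto
  have A1: "A - {2*k} = {2*k+1..<Suc N}" unfolding A_def by auto
  have A2: "A - {2*k} - {2*k+1} = {2*k+2..<Suc N}" "A - {2*k+1} - {2*k} = {2*k+2..<Suc N}"
    unfolding A_def by auto
  have lb1: "\<And>v. v \<in># ms a (A - {2*k}) \<Longrightarrow> a (2*k+1) \<le> v" using lowb A1 by simp
  have "a (2*k) \<in># ms b A" using H1 fA A0 ms_mem unfolding A_def by metis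
  then obtain p where p: "p \<in> A" "b p = a (2*k)" using ms_mem fA by metis
  have "p = 2*k \<or> p = 2*k+1"
  proof (rule ccontr)
    assume "\<not> (p = 2*k \<or> p = 2*k+1)"
    then have p2: "2*k+2 \<le> p" "p \<le> N" using p unfolding A_def by auto
    then have "b (p-2) < b p" using strb unfolding strict2_def by (metis le_add_diff_inverse2 le_trans add_leD2 nat_le_linear)
    moreover have "p - 2 \<in> A" using p2 unfolding A_def by auto
    then have "b (p-2) \<in># ms a A" using H1 ms_mem fA by (metis A_def)
    then have "a (2*k) \<le> b (p-2)" using lowb unfolding A_def by blast
    ultimately show False using p by simp
  qed
  then show ?thesis
  proof
    assume p0: "p = 2*k"
    have E1: "ms b (A - {2*k}) = ms a (A - {2*k})"
      using H1 ms_remove[OF fA A0(1), of b] ms_remove[OF fA A0(1), of a] p p0 unfolding A_def by simp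
    have E2: "ms rb (A - {2*k}) = ms ra (A - {2*k})"
      using H2 ms_remove[OF fA A0(1), of rb] ms_remove[OF fA A0(1), of ra] p p0 unfolding A_def rb_def ra_def by simp
    have fA1: "finite (A - {2*k})" using fA by simp
    have m1: "2*k+1 \<in> A - {2*k}" using A0 by simp
    have "ra (2*k+1) \<in># ms rb (A - {2*k})" using E2 ms_mem[OF fA1] m1 by metis
    then obtain q where q: "q \<in> A - {2*k}" "b q + q div 2 = a (2*k+1) + k"
      using ms_mem[OF fA1] unfolding rb_def ra_def by auto
    have bk1: "b (2*k+1) = a (2*k+1)"
    proof (cases "q = 2*k+1")
      case True then show ?thesis using q by simp
    next
      case False
      then have "2*k+2 \<le> q" using q unfolding A_def by auto
      then have "k + 1 \<le> q div 2" by linarith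
      then have "b q < a (2*k+1)" using q by linarith
      moreover have "b q \<in># ms a (A - {2*k})" using E1 ms_mem[OF fA1] q by metis
      ultimately show ?thesis using lb1 by force
    qed
    have "PMp a b k" unfolding PMp_def using p p0 bk1 by simp
    moreover have "ms b {2*k+2..<Suc N} = ms a {2*k+2..<Suc N}"
      using E1 ms_remove[OF fA1 m1, of b] ms_remove[OF fA1 m1, of a] bk1 A2 by simp
    moreover have "ms rb {2*k+2..<Suc N} = ms ra {2*k+2..<Suc N}"
      using E2 ms_remove[OF fA1 m1, of rb] ms_remove[OF fA1 m1, of ra] bk1 A2 unfolding rb_def ra_def by simp
    ultimately show ?thesis unfolding rb_def ra_def by simp
  next
    assume p1: "p = 2*k+1"
    have E1: "ms b (A - {2*k+1}) = ms a (A - {2*k})"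
      using H1 ms_remove[OF fA A0(2), of b] ms_remove[OF fA A0(1), of a] p p1 unfolding A_def by simp
    have rr: "rb (2*k+1) = ra (2*k)" unfolding rb_def ra_def using p p1 by simp
    have E2: "ms rb (A - {2*k+1}) = ms ra (A - {2*k})"
      using H2 ms_remove[OF fA A0(2), of rb] ms_remove[OF fA A0(1), of ra] rr unfolding A_def rb_def ra_def by simp
    have fA1: "finite (A - {2*k})" "finite (A - {2*k+1})" using fA by auto
    have m1: "2*k+1 \<in> A - {2*k}" "2*k \<in> A - {2*k+1}" using A0 by auto
    have "ra (2*k+1) \<in># ms rb (A - {2*k+1})" using E2 ms_mem[OF fA1(1)] m1 by metis
    then obtain q where q: "q \<in> A - {2*k+1}" "b q + q div 2 = a (2*k+1) + k"
      using ms_mem[OF fA1(2)] unfolding rb_def ra_def by auto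
    have bk0: "b (2*k) = a (2*k+1)"
    proof (cases "q = 2*k")
      case True then show ?thesis using q by simp
    next
      case False
      then have "2*k+2 \<le> q" using q unfolding A_def by auto
      then have "k + 1 \<le> q div 2" by linarith
      then have "b q < a (2*k+1)" using q by linarith
      moreover have "b q \<in># ms a (A - {2*k})" using E1 ms_mem[OF fA1(2)] q by metis
      ultimately show ?thesis using lb1 by force
    qed
    have "PMp a b k" unfolding PMp_def using p p1 bk0 by simp
    moreover have "ms b {2*k+2..<Suc N} = ms a {2*k+2..<Suc N}"
      using E1 ms_remove[OF fA1(2) m1(2), of b] ms_remove[OF fA1(1) m1(1), of a] bk0 A2 by simp
    moreover have "ms rb {2*k+2..<Suc N} = ms ra {2*k+2..<Suc N}"
      using E2 ms_remove[OF fA1(2) m1(2), of rb] ms_remove[OF fA1(1) m1(1), of ra] bk0 A2 unfolding rb_def ra_def by simp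
    ultimately show ?thesis unfolding rb_def ra_def by simp
  qed
qed

end



context
  fixes N :: nat and a b :: "nat \<Rightarrow> nat"
  assumes mono: "\<forall>i < N. a i \<le> a (Suc i)"
    and str: "strict2 N a"
    and strb: "strict2 N b"
    and H1: "mset_seq N b = mset_seq N a"
    and H2: "mset_seq N (ring b) = mset_seq N (ring a)"
begin

lemma inv: "2*k \<le> Suc N \<Longrightarrow> ms b {2*k..<Suc N} = ms a {2*k..<Suc N}
    \<and> ms (\<lambda>i. b i + i div 2) {2*k..<Suc N} = ms (\<lambda>i. a i + i div 2) {2*k..<Suc N}
    \<and> (\<forall>j<k. PMp a b j)"
proof (induction k)
  case 0
  have r: "ring b = (\<lambda>i. b i + i div 2)" "ring a = (\<lambda>i. a i + i div 2)"
    unfolding ring_def by auto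
  show ?case using H1 H2 unfolding mset_seq_ms r by simp
next
  case (Suc k)
  then have k: "2*k+1 \<le> N" by simp
  have IH: "ms b {2*k..<Suc N} = ms a {2*k..<Suc N}"
    "ms (\<lambda>i. b i + i div 2) {2*k..<Suc N} = ms (\<lambda>i. a i + i div 2) {2*k..<Suc N}"
    "\<forall>j<k. PMp a b j" using Suc by auto
  have st: "PMp a b k \<and> ms b {2*k+2..<Suc N} = ms a {2*k+2..<Suc N}
    \<and> ms (\<lambda>i. b i + i div 2) {2*k+2..<Suc N} = ms (\<lambda>i. a i + i div 2) {2*k+2..<Suc N}"
    using step[OF mono str strb k IH(1) IH(2)] .
  have e: "2 * Suc k = 2*k+2" by simp
  show ?case unfolding e using st IH(3) less_Suc_eq by auto
qed

lemma PM: "2*k+1 \<le> N \<Longrightarrow> PMp a b k"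
  using inv[of "Suc k"] by simp

lemma PM_last: "2*k = N \<Longrightarrow> b (2*k) = a (2*k)"
proof -
  assume k: "2*k = N"
  have "ms b {2*k..<Suc N} = ms a {2*k..<Suc N}" using inv[of k] k by simp
  moreover have "{2*k..<Suc N} = {N}" using k by auto
  ultimately show ?thesis using k unfolding ms_def by simp
qed

end



definition partner :: "nat \<Rightarrow> nat" where
  "partner i = (if even i then Suc i else i - 1)"

definition swp :: "nat set \<Rightarrow> (nat \<Rightarrow> nat) \<Rightarrow> nat \<Rightarrow> nat" where
  "swp P a i = (if i div 2 \<in> P then a (partner i) else a i)"

definition blkP :: "nat \<Rightarrow> (nat \<Rightarrow> nat) \<Rightarrow> nat set \<Rightarrow> nat set" where
  "blkP N a X = {k. \<exists>s\<in>X. idx N a s \<le> 2*k \<and> 2*k+1 \<le> idx N a (Suc s)}"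

lemma ar1: "even (p::nat) \<Longrightarrow> odd q \<Longrightarrow> (p \<le> i \<and> i \<le> q) \<longleftrightarrow> (p \<le> 2*(i div 2) \<and> 2*(i div 2)+1 \<le> q)"
  by presburger

lemma ar3: "even (p::nat) \<Longrightarrow> odd q \<Longrightarrow> (p \<le> i \<and> i \<le> q \<and> even (i - p)) \<longleftrightarrow> (p \<le> 2*(i div 2) \<and> 2*(i div 2)+1 \<le> q \<and> even i)"
  by presburger

lemma ar4: "even (p::nat) \<Longrightarrow> odd q \<Longrightarrow> (p \<le> i \<and> i \<le> q \<and> odd (i - p)) \<longleftrightarrow> (p \<le> 2*(i div 2) \<and> 2*(i div 2)+1 \<le> q \<and> odd i)"
  by presburger

lemma pe: "(x::nat) mod 2 = s mod 2 \<Longrightarrow> even s \<Longrightarrow> even x" by presburger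
lemma po: "(x::nat) mod 2 = Suc s mod 2 \<Longrightarrow> even s \<Longrightarrow> odd x" by presburger
lemma ao: "odd (x::nat) \<Longrightarrow> 2*k+1 \<le> x \<Longrightarrow> \<not> 2*k+3 \<le> x \<Longrightarrow> x = 2*k+1" by presburger
lemma ae: "even (x::nat) \<Longrightarrow> x \<le> 2*k+2 \<Longrightarrow> \<not> x \<le> 2*k \<Longrightarrow> x = 2*k+2" by presburger

lemma ar2: "even (p::nat) \<Longrightarrow> p \<le> i \<Longrightarrow> even (i - p) \<longleftrightarrow> even i"
  by presburger

lemma partner_div: "partner i div 2 = i div 2"
  unfolding partner_def by (cases "even i") (auto elim!: evenE oddE)

lemma partner_partner: "partner (partner i) = i"
  unfolding partner_def by (cases "even i") (auto elim!: evenE oddE)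

lemma partner_le: "2*(i div 2)+1 \<le> N \<Longrightarrow> partner i \<le> N"
  unfolding partner_def by (cases "even i") (auto elim!: evenE oddE)

context
  fixes N :: nat and a :: "nat \<Rightarrow> nat"
  assumes mono: "\<forall>i < N. a i \<le> a (Suc i)"
    and str: "strict2 N a"
    and ne: "singles N a \<noteq> {}"
begin

lemma Xf:
  assumes X: "X \<subseteq> {s. s < mu N a \<and> even s}" and s: "s \<in> X"
  shows "even (idx N a s)" "odd (idx N a (Suc s))" "idx N a (Suc s) \<le> N"
    "idx N a s \<in> singles N a" "idx N a (Suc s) \<in> singles N a" "s < mu N a"
proof -
  have s1: "s < mu N a" "even s" using X s by auto
  show "even (idx N a s)" using pe[OF idx_par[OF mono str ne, of s]] s1 by simp
  show "odd (idx N a (Suc s))" using po[OF idx_par[OF mono str ne, of "Suc s"]] s1 by simp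
  show "idx N a (Suc s) \<le> N" using idx_le[OF mono str ne, of "Suc s"] s1 by simp
  show "idx N a s \<in> singles N a" "idx N a (Suc s) \<in> singles N a" using idx_in[OF mono str ne] s1 by auto
  show "s < mu N a" by (rule s1(1))
qed

lemma aX_eq:
  assumes X: "X \<subseteq> {s. s < mu N a \<and> even s}" and i: "i \<le> N"
  shows "aX N a X i = swp (blkP N a X) a i"
proof -
  have e3: "\<And>s. s \<in> X \<Longrightarrow> (idx N a s \<le> i \<and> i \<le> idx N a (Suc s) \<and> even (i - idx N a s))
     \<longleftrightarrow> (idx N a s \<le> 2*(i div 2) \<and> 2*(i div 2)+1 \<le> idx N a (Suc s) \<and> even i)"
    by (rule ar3[OF Xf(1)[OF X] Xf(2)[OF X]])
  have e4: "\<And>s. s \<in> X \<Longrightarrow> (idx N a s \<le> i \<and> i \<le> idx N a (Suc s) \<and> odd (i - idx N a s))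
     \<longleftrightarrow> (idx N a s \<le> 2*(i div 2) \<and> 2*(i div 2)+1 \<le> idx N a (Suc s) \<and> odd i)"
    by (rule ar4[OF Xf(1)[OF X] Xf(2)[OF X]])
  have c1: "(\<exists>s\<in>X. idx N a s \<le> i \<and> i \<le> idx N a (Suc s) \<and> even (i - idx N a s))
      \<longleftrightarrow> (i div 2 \<in> blkP N a X \<and> even i)"
    unfolding blkP_def using e3 by blast
  have c2: "(\<exists>s\<in>X. idx N a s \<le> i \<and> i \<le> idx N a (Suc s) \<and> odd (i - idx N a s))
      \<longleftrightarrow> (i div 2 \<in> blkP N a X \<and> odd i)"
    unfolding blkP_def using e4 by blast
  show ?thesis
  proof (cases "i div 2 \<in> blkP N a X")
    case True
    show ?thesis
    proof (cases "even i")
      case True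
      then show ?thesis using c1 \<open>i div 2 \<in> blkP N a X\<close> unfolding aX_def swp_def partner_def
        by (simp only: if_True simp_thms)
    next
      case False
      then show ?thesis using c1 c2 \<open>i div 2 \<in> blkP N a X\<close> unfolding aX_def swp_def partner_def
        by (simp only: if_True if_False simp_thms)
    qed
  next
    case False
    then show ?thesis using c1 c2 unfolding aX_def swp_def by (simp only: if_False simp_thms)
  qed
qed

lemma blk_C1: "X \<subseteq> {s. s < mu N a \<and> even s} \<Longrightarrow> k \<in> blkP N a X \<Longrightarrow> 2*k+1 \<le> N"
proof -
  assume X: "X \<subseteq> {s. s < mu N a \<and> even s}" and "k \<in> blkP N a X"
  then obtain s where s: "s \<in> X" "2*k+1 \<le> idx N a (Suc s)" unfolding blkP_def by auto
  then show ?thesis using Xf(3)[OF X s(1)] by linarith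
qed

lemma blk_C2:
  assumes X: "X \<subseteq> {s. s < mu N a \<and> even s}" and k: "2*k+2 \<le> N"
    and d: "(k \<in> blkP N a X) \<noteq> (Suc k \<in> blkP N a X)"
  shows "a (2*k+1) < a (2*k+2)"
proof -
  have "2*k+1 \<in> singles N a \<or> 2*k+2 \<in> singles N a"
  proof (cases "k \<in> blkP N a X")
    case True
    then obtain s where s: "s \<in> X" "idx N a s \<le> 2*k" "2*k+1 \<le> idx N a (Suc s)" unfolding blkP_def by auto
    have "Suc k \<notin> blkP N a X" using d True by simp
    then have "\<not> 2*k+3 \<le> idx N a (Suc s)" using s unfolding blkP_def by auto
    moreover have "odd (idx N a (Suc s))" using Xf[OF X s(1)] by simp
    ultimately have "idx N a (Suc s) = 2*k+1" using s(3) ao by blast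
    then show ?thesis using Xf[OF X s(1)] by simp
  next
    case False
    then have "Suc k \<in> blkP N a X" using d by simp
    then obtain s where s: "s \<in> X" "idx N a s \<le> 2*k+2" "2*k+3 \<le> idx N a (Suc s)" unfolding blkP_def by auto
    then have "\<not> idx N a s \<le> 2*k" using False unfolding blkP_def by auto
    moreover have "even (idx N a s)" using Xf[OF X s(1)] by simp
    ultimately have "idx N a s = 2*k+2" using s(2) ae by blast
    then show ?thesis using Xf[OF X s(1)] by simp
  qed
  then show ?thesis
  proof
    assume "2*k+1 \<in> singles N a"
    then show ?thesis using single_nb[OF mono str, of "2*k+1"] k by simp
  next
    assume "2*k+2 \<in> singles N a"
    then show ?thesis using single_nb[OF mono str, of "2*k+2"] k by simp
  qed
qed

end



lemma mset_seq_cong: "(\<And>i. i \<le> N \<Longrightarrow> f i = g i) \<Longrightarrow> mset_seq N f = mset_seq N g"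
  unfolding mset_seq_def by (intro arg_cong[where f=mset] map_cong) auto

lemma strict2_cong: "(\<And>i. i \<le> N \<Longrightarrow> f i = g i) \<Longrightarrow> strict2 N f = strict2 N g"
proof -
  assume h: "\<And>i. i \<le> N \<Longrightarrow> f i = g i"
  have "\<forall>i. i+2 \<le> N \<longrightarrow> f i = g i \<and> f (i+2) = g (i+2)" using h by simp
  then show ?thesis unfolding strict2_def by auto
qed

context
  fixes N :: nat and a :: "nat \<Rightarrow> nat" and P :: "nat set"
  assumes mono: "\<forall>i < N. a i \<le> a (Suc i)"
    and str: "strict2 N a"
    and C1: "\<And>k. k \<in> P \<Longrightarrow> 2*k+1 \<le> N"
    and C2: "\<And>k. 2*k+2 \<le> N \<Longrightarrow> (k \<in> P) \<noteq> (Suc k \<in> P) \<Longrightarrow> a (2*k+1) < a (2*k+2)"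
begin

definition pp :: "nat \<Rightarrow> nat" where "pp i = (if i div 2 \<in> P then partner i else i)"

lemma pp_pi: "pp (pp i) = i"
  unfolding pp_def using partner_div partner_partner by auto

lemma pp_le: "i \<le> N \<Longrightarrow> pp i \<le> N"
  unfolding pp_def using C1 partner_le by auto

lemma swp_pp: "swp P a i = a (pp i)"
  unfolding swp_def pp_def by simp

lemma swp_mset: "mset_seq N (swp P a) = mset_seq N a"
proof -
  have inj: "inj pp" by (metis injI pp_pi)
  have d: "distinct (map pp [0..<Suc N])" using inj by (simp only: distinct_map distinct_upt) (metis inj_on_subset subset_UNIV)
  have st: "set (map pp [0..<Suc N]) = set [0..<Suc N]"
  proof
    show "set (map pp [0..<Suc N]) \<subseteq> set [0..<Suc N]"
    proof
      fix x assume "x \<in> set (map pp [0..<Suc N])"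
      then obtain i where "i \<in> set [0..<Suc N]" "x = pp i" unfolding set_map by blast
      then have "i \<le> N" "x = pp i" by auto
      then have "x \<le> N" using pp_le[of i] by simp
      then show "x \<in> set [0..<Suc N]" by (simp only: set_upt atLeastLessThan_iff) linarith
    qed
    show "set [0..<Suc N] \<subseteq> set (map pp [0..<Suc N])"
    proof
      fix i assume "i \<in> set [0..<Suc N]"
      then have "i \<le> N" by (simp only: set_upt atLeastLessThan_iff) linarith
      then have "pp i \<le> N" using pp_le[of i] by simp
      then have "pp i \<in> set [0..<Suc N]" by (simp only: set_upt atLeastLessThan_iff) linarith
      then show "i \<in> set (map pp [0..<Suc N])" using pp_pi by (metis image_eqI set_map)
    qed
  qed
  have "mset (map pp [0..<Suc N]) = mset [0..<Suc N]"
    using d st set_eq_iff_mset_eq_distinct[of "map pp [0..<Suc N]" "[0..<Suc N]"] by simp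
  then have "mset (map a (map pp [0..<Suc N])) = mset (map a [0..<Suc N])"
    by (metis mset_map)
  then show ?thesis unfolding mset_seq_def swp_pp by (simp add: comp_def)
qed

lemma swp_strict: "strict2 N (swp P a)"
  unfolding strict2_def
proof (intro allI impI)
  fix i assume i: "i + 2 \<le> N"
  define k where "k = i div 2"
  have k2: "(i+2) div 2 = Suc k" unfolding k_def by simp
  have sa: "\<And>j. j + 2 \<le> N \<Longrightarrow> a j < a (j+2)" using str unfolding strict2_def by blast
  have ml: "\<And>x y. x + 2 \<le> y \<Longrightarrow> y \<le> N \<Longrightarrow> a x < a y" using mono_lt[OF mono str] by blast
  have L: "swp P a i = (if k \<in> P then a (partner i) else a i)" unfolding swp_def k_def by simp
  have R: "swp P a (i+2) = (if Suc k \<in> P then a (partner (i+2)) else a (i+2))" unfolding swp_def k2 by simp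
  show "swp P a i < swp P a (i + 2)"
  proof (cases "even i")
    case True
    then have ik: "i = 2*k" unfolding k_def by simp
    have pe1: "partner i = i + 1" "partner (i+2) = i + 3" using True unfolding partner_def by auto
    show ?thesis
    proof (cases "k \<in> P"; cases "Suc k \<in> P")
      assume h: "k \<in> P" "Suc k \<in> P"
      have "2 * Suc k + 1 \<le> N" using C1 h(2) by blast
      then have "i + 1 + 2 \<le> N" using ik by simp
      then have "a (i+1) < a (i+1+2)" by (rule sa)
      moreover have "i+1+2 = i+3" by simp
      ultimately have "a (i+1) < a (i+3)" by (simp add: numeral_eq_Suc)
      then show ?thesis using L R h pe1 by simp
    next
      assume h: "k \<in> P" "Suc k \<notin> P"
      have "2*k+2 \<le> N" using i ik by simp
      then have "a (2*k+1) < a (2*k+2)" using C2 h by blast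
      then show ?thesis using L R h pe1 ik by simp
    next
      assume h: "k \<notin> P" "Suc k \<in> P"
      have "2 * Suc k + 1 \<le> N" using C1 h(2) by blast
      then have "a i < a (i+3)" using ml[of i "i+3"] ik by simp
      then show ?thesis using L R h pe1 by simp
    next
      assume h: "k \<notin> P" "Suc k \<notin> P"
      then show ?thesis using L R sa[OF i] by simp
    qed
  next
    case False
    then have ik: "i = 2*k+1" unfolding k_def by presburger
    have pe1: "partner i = 2*k" "partner (i+2) = 2*k + 2" using False ik unfolding partner_def by auto
    show ?thesis
    proof (cases "k \<in> P"; cases "Suc k \<in> P")
      assume h: "k \<in> P" "Suc k \<in> P"
      have "2*k + 2 \<le> N" using i ik by simp
      then have "a (2*k) < a (2*k+2)" using sa[of "2*k"] by simp
      then show ?thesis using L R h pe1 by simp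
    next
      assume h: "k \<in> P" "Suc k \<notin> P"
      have "a (2*k) < a (2*k+3)" using ml[of "2*k" "2*k+3"] i ik by simp
      then show ?thesis using L R h pe1 ik by (simp add: numeral_eq_Suc)
    next
      assume h: "k \<notin> P" "Suc k \<in> P"
      have "2*k+2 \<le> N" using i ik by simp
      then have "a (2*k+1) < a (2*k+2)" using C2 h by blast
      then show ?thesis using L R h pe1 ik by simp
    next
      assume h: "k \<notin> P" "Suc k \<notin> P"
      then show ?thesis using L R sa[OF i] by simp
    qed
  qed
qed

end

lemma part4:
  assumes mono: "\<forall>i < N. a i \<le> a (Suc i)"
    and str: "strict2 N a"
    and ne: "singles N a \<noteq> {}"
    and X: "X \<subseteq> {s. s < mu N a \<and> even s}"
  shows "inE N a (aX N a X)"
proof -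
  have eq: "\<And>i. i \<le> N \<Longrightarrow> aX N a X i = swp (blkP N a X) a i" using aX_eq[OF mono str ne X] by blast
  have C1: "\<And>k. k \<in> blkP N a X \<Longrightarrow> 2*k+1 \<le> N" using blk_C1[OF mono str ne X] by blast
  have C2: "\<And>k. 2*k+2 \<le> N \<Longrightarrow> (k \<in> blkP N a X) \<noteq> (Suc k \<in> blkP N a X) \<Longrightarrow> a (2*k+1) < a (2*k+2)"
    using blk_C2[OF mono str ne X] by blast
  show ?thesis unfolding inE_def
    using swp_mset[OF mono str C1 C2] swp_strict[OF mono str C1 C2] mset_seq_cong[OF eq] strict2_cong[OF eq]
    by simp
qed




definition eff :: "nat \<Rightarrow> (nat \<Rightarrow> nat) \<Rightarrow> nat \<Rightarrow> bool" where
  "eff N a k = (2*k+1 \<le> N \<and> a (2*k) \<noteq> a (2*k+1))"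

definition swd :: "(nat \<Rightarrow> nat) \<Rightarrow> (nat \<Rightarrow> nat) \<Rightarrow> nat \<Rightarrow> bool" where
  "swd a b k = (b (2*k) \<noteq> a (2*k))"

lemma three: "(n::nat) + 3 = Suc (Suc (Suc n))" by simp

context
  fixes N :: nat and a b :: "nat \<Rightarrow> nat"
  assumes mono: "\<forall>i < N. a i \<le> a (Suc i)"
    and str: "strict2 N a"
    and ne: "singles N a \<noteq> {}"
    and strb: "strict2 N b"
    and H1: "mset_seq N b = mset_seq N a"
    and H2: "mset_seq N (ring b) = mset_seq N (ring a)"
begin

lemma PMs: "eff N a k \<Longrightarrow> swd a b k \<Longrightarrow> b (2*k) = a (2*k+1) \<and> b (2*k+1) = a (2*k)"
  using PM[OF mono str strb H1 H2, of k] unfolding eff_def swd_def PMp_def by auto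

lemma PMn: "eff N a k \<Longrightarrow> \<not> swd a b k \<Longrightarrow> b (2*k) = a (2*k) \<and> b (2*k+1) = a (2*k+1)"
  using PM[OF mono str strb H1 H2, of k] unfolding eff_def swd_def PMp_def by auto

lemma sb: "j + 2 \<le> N \<Longrightarrow> b j < b (j+2)" using strb unfolding strict2_def by blast

lemma link:
  assumes e: "eff N a j" and j: "2*j+3 \<le> N" and l: "a (2*j+1) = a (2*j+2)"
  shows "eff N a (Suc j) \<and> (swd a b j \<longleftrightarrow> swd a b (Suc j))"
proof -
  have "a (2*j+1) < a (2*j+3)" using mono_lt[OF mono str, of "2*j+1" "2*j+3"] j by simp
  then have e2: "eff N a (Suc j)" unfolding eff_def using j l by (simp add: three)
  have "swd a b j \<longleftrightarrow> swd a b (Suc j)"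
  proof
    assume s: "swd a b j"
    show "swd a b (Suc j)"
    proof (rule ccontr)
      assume "\<not> swd a b (Suc j)"
      then have "b (2*j+2) = a (2*j+2)" unfolding swd_def by simp
      moreover have "b (2*j) = a (2*j+1)" using PMs[OF e s] by simp
      moreover have "b (2*j) < b (2*j+2)" using sb[of "2*j"] j by simp
      ultimately show False using l by simp
    qed
  next
    assume s: "swd a b (Suc j)"
    show "swd a b j"
    proof (rule ccontr)
      assume n: "\<not> swd a b j"
      have "b (2*j+1) = a (2*j+1)" using PMn[OF e n] by simp
      moreover have "b (2*(Suc j)+1) = a (2*(Suc j))" using PMs[OF e2 s] by simp
      then have "b (2*j+3) = a (2*j+2)" by (simp add: three)
      moreover have "b (2*j+1) < b (2*j+1+2)" using sb[of "2*j+1"] j by simp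
      then have "b (2*j+1) < b (2*j+3)" by (simp add: numeral_eq_Suc)
      ultimately show False using l by simp
    qed
  qed
  then show ?thesis using e2 by simp
qed

lemma endb:
  assumes e: "eff N a j" and j: "2*j+2 = N" and l: "a (2*j+1) = a (2*j+2)"
  shows "\<not> swd a b j"
proof
  assume s: "swd a b j"
  have "b (2*(Suc j)) = a (2*(Suc j))" using PM_last[OF mono str strb H1 H2, of "Suc j"] j by simp
  then have "b (2*j+2) = a (2*j+2)" by simp
  moreover have "b (2*j) = a (2*j+1)" using PMs[OF e s] by simp
  moreover have "b (2*j) < b (2*j+2)" using sb[of "2*j"] j by simp
  ultimately show False using l by simp
qed

lemma ns_eff: "eff N a j \<Longrightarrow> 2*j+1 \<notin> singles N a \<Longrightarrow> 2*j+1 < N \<and> a (2*j+1) = a (2*j+2)"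
proof -
  assume e: "eff N a j" and n: "2*j+1 \<notin> singles N a"
  have "2*j+1 \<le> N" using e unfolding eff_def by simp
  from nonsingle[OF mono str this n] e show ?thesis unfolding eff_def by auto
qed

lemma prop_blk:
  assumes s: "s < mu N a" and p: "idx N a s = 2*p"
  shows "2*(p+d)+1 \<le> idx N a (Suc s) \<Longrightarrow> eff N a (p+d) \<and> (swd a b (p+d) \<longleftrightarrow> swd a b p)"
proof (induction d)
  case 0
  have sp: "2*p \<in> singles N a" using idx_in[OF mono str ne, of s] s p by simp
  have "idx N a (Suc s) \<le> N" using idx_le[OF mono str ne, of "Suc s"] s by simp
  then have "2*p < N" using 0 by simp
  then have "a (2*p) < a (2*p+1)" using single_nb[OF mono str sp] by simp
  then show ?case unfolding eff_def using 0 \<open>idx N a (Suc s) \<le> N\<close> by simp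
next
  case (Suc d)
  define j where "j = p + d"
  have IH: "eff N a j" "swd a b j \<longleftrightarrow> swd a b p" using Suc unfolding j_def by auto
  have lt: "2*j+3 \<le> idx N a (Suc s)" using Suc.prems unfolding j_def by simp
  have "2*j+1 \<notin> singles N a"
    using nonsingle_between[OF mono str ne s, of "2*j+1"] lt p unfolding j_def by simp
  then have l: "a (2*j+1) = a (2*j+2)" using ns_eff IH(1) by blast
  have "idx N a (Suc s) \<le> N" using idx_le[OF mono str ne, of "Suc s"] s by simp
  then have "2*j+3 \<le> N" using lt by simp
  then have "eff N a (Suc j) \<and> (swd a b j \<longleftrightarrow> swd a b (Suc j))" using link IH(1) l by blast
  then show ?case using IH unfolding j_def by simp
qed

lemma back_l: "eff N a k \<Longrightarrow> swd a b k \<Longrightarrow>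
  \<exists>j \<le> k. 2*j \<in> singles N a \<and> swd a b j \<and> (\<forall>x. 2*j < x \<and> x \<le> 2*k \<longrightarrow> x \<notin> singles N a)"
proof (induction k)
  case 0
  have "0 \<in> singles N a"
  proof (rule ccontr)
    assume "0 \<notin> singles N a"
    then have "a 0 = a 1" using nonsingle[OF mono str, of 0] by simp
    then show False using 0 unfolding eff_def by simp
  qed
  then show ?case using 0 by auto
next
  case (Suc l)
  show ?case
  proof (cases "2 * Suc l \<in> singles N a")
    case True then show ?thesis using Suc.prems by auto
  next
    case False
    have kN: "2 * Suc l \<le> N" using Suc.prems unfolding eff_def by simp
    have "a (2 * Suc l) \<noteq> a (Suc (2 * Suc l))" using Suc.prems unfolding eff_def by simp
    then have l1: "a (2*Suc l - 1) = a (2 * Suc l)" using nonsingle[OF mono str kN False] by auto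
    then have l2: "a (2*l+1) = a (2*l+2)" by simp
    have "a (2*l) < a (2*l+2)" using mono_lt[OF mono str, of "2*l" "2*l+2"] kN by simp
    then have el: "eff N a l" unfolding eff_def using l2 kN by simp
    have "2*l+3 \<le> N" using Suc.prems unfolding eff_def by simp
    then have "swd a b l" using link[OF el _ l2] Suc.prems by blast
    then obtain j where j: "j \<le> l" "2*j \<in> singles N a" "swd a b j"
      "\<forall>x. 2*j < x \<and> x \<le> 2*l \<longrightarrow> x \<notin> singles N a" using Suc.IH el by blast
    have ns: "2*l+1 \<notin> singles N a"
    proof
      assume "2*l+1 \<in> singles N a"
      moreover have "2*l+1 \<le> N" using kN by simp
      ultimately have "\<forall>j\<le>N. a j = a (2*l+1) \<longrightarrow> j = 2*l+1" using single_iff[OF mono str, of "2*l+1"] by blast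
      moreover have "2*l+2 \<le> N" using kN by simp
      ultimately have "a (2*l+2) = a (2*l+1) \<longrightarrow> 2*l+2 = 2*l+1" by blast
      then have "2*l+2 = 2*l+1" using l2 by simp
      then show False by simp
    qed
    have "\<forall>x. 2*j < x \<and> x \<le> 2 * Suc l \<longrightarrow> x \<notin> singles N a"
    proof (intro allI impI)
      fix x assume x: "2*j < x \<and> x \<le> 2 * Suc l"
      then have "x \<le> 2*l \<or> x = 2*l+1 \<or> x = 2 * Suc l" by auto
      then show "x \<notin> singles N a" using j(4) x ns False by auto
    qed
    then show ?thesis using j by (intro exI[of _ j]) simp
  qed
qed

lemma fwd_l: "eff N a k \<Longrightarrow> swd a b k \<Longrightarrow> \<exists>q \<in> singles N a. 2*k+1 \<le> q"
proof (induction "N - 2*k" arbitrary: k rule: less_induct)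
  case less
  show ?case
  proof (cases "2*k+1 \<in> singles N a")
    case True then show ?thesis by blast
  next
    case False
    then have l: "2*k+1 < N" "a (2*k+1) = a (2*k+2)" using ns_eff less.prems by auto
    show ?thesis
    proof (cases "2*k+2 = N")
      case True then show ?thesis using endb less.prems l by blast
    next
      case False
      then have "2*k+3 \<le> N" using l by simp
      then have "eff N a (Suc k) \<and> swd a b (Suc k)" using link less.prems l by blast
      moreover have "N - 2 * Suc k < N - 2*k" using l by simp
      ultimately obtain q where "q \<in> singles N a" "2 * Suc k + 1 \<le> q" using less.hyps by blast
      then show ?thesis by (intro bexI[of _ q]) auto
    qed
  qed
qed

end



lemma part5:
  assumes mono: "\<forall>i < N. a i \<le> a (Suc i)"
    and str: "strict2 N a"
    and ne: "singles N a \<noteq> {}"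
    and bE: "inE N a b"
    and H2: "mset_seq N (ring b) = mset_seq N (ring a)"
  shows "\<exists>X. X \<subseteq> {s. s < mu N a \<and> even s} \<and> (\<forall>i \<le> N. b i = aX N a X i)"
proof -
  have strb: "strict2 N b" and H1: "mset_seq N b = mset_seq N a" using bE unfolding inE_def by auto
  define X where "X = {s. s < mu N a \<and> even s \<and> b (idx N a s) \<noteq> a (idx N a s)}"
  have X: "X \<subseteq> {s. s < mu N a \<and> even s}" unfolding X_def by auto
  have inblk: "k \<in> blkP N a X" if e: "eff N a k" and w: "swd a b k" for k
  proof -
    obtain j where j: "j \<le> k" "2*j \<in> singles N a" "swd a b j"
      "\<forall>x. 2*j < x \<and> x \<le> 2*k \<longrightarrow> x \<notin> singles N a"
      using back_l[OF mono str ne strb H1 H2 e w] by blast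
    obtain q where q: "q \<in> singles N a" "2*k+1 \<le> q" using fwd_l[OF mono str ne strb H1 H2 e w] by blast
    obtain s where s: "s \<le> mu N a" "idx N a s = 2*j" using idx_ex[OF mono str ne j(2)] by blast
    have smu: "s < mu N a"
    proof (rule ccontr)
      assume "\<not> s < mu N a"
      then have "s = mu N a" using s by simp
      then have "q \<le> 2*j" using idx_last[OF mono str ne q(1)] s by simp
      then show False using q j by simp
    qed
    have "idx N a s mod 2 = s mod 2" using idx_par[OF mono str ne s(1)] .
    then have es: "even s" using s by presburger
    have sX: "s \<in> X" unfolding X_def using smu es j(3) s unfolding swd_def by simp
    have i1: "idx N a (Suc s) \<in> singles N a" using idx_in[OF mono str ne, of "Suc s"] smu by simp
    have i2: "2*j < idx N a (Suc s)" using idx_mono[OF mono str ne, of s "Suc s"] smu s by simp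
    have "\<not> idx N a (Suc s) \<le> 2*k" using j(4) i1 i2 by blast
    then have "2*k+1 \<le> idx N a (Suc s)" by simp
    then show ?thesis unfolding blkP_def using sX s j by auto
  qed
  have blksw: "swd a b k" if kb: "k \<in> blkP N a X" for k
  proof -
    obtain s where s: "s \<in> X" "idx N a s \<le> 2*k" "2*k+1 \<le> idx N a (Suc s)" using kb unfolding blkP_def by auto
    have smu: "s < mu N a" using s(1) unfolding X_def by simp
    have "even (idx N a s)" using Xf(1)[OF mono str ne X s(1)] .
    then obtain p where p: "idx N a s = 2*p" by (auto elim!: evenE)
    have pk: "p \<le> k" using s(2) p by simp
    have "2*(p+(k-p))+1 \<le> idx N a (Suc s)" using s(3) pk by simp
    then have "swd a b (p+(k-p)) \<longleftrightarrow> swd a b p"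
      using prop_blk[OF mono str ne strb H1 H2 smu p] by blast
    moreover have "swd a b p" using s(1) p unfolding X_def swd_def by simp
    ultimately show "swd a b k" using pk by simp
  qed
  have "b i = swp (blkP N a X) a i" if i: "i \<le> N" for i
  proof -
    define k where "k = i div 2"
    have ik: "i = 2*k \<or> i = 2*k+1" unfolding k_def by presburger
    have pt: "(i = 2*k \<and> partner i = 2*k+1) \<or> (i = 2*k+1 \<and> partner i = 2*k)"
      unfolding k_def partner_def by (auto elim!: evenE oddE)
    show ?thesis
    proof (cases "2*k+1 \<le> N")
      case False
      then have "i = 2*k" "2*k = N" using ik i by auto
      moreover have "k \<notin> blkP N a X" using blk_C1[OF mono str ne X, of k] False by blast
      ultimately show ?thesis using PM_last[OF mono str strb H1 H2, of k] unfolding swp_def k_def by simp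
    next
      case True
      note kN = True
      show ?thesis
      proof (cases "a (2*k) = a (2*k+1)")
        case True
        then have "b (2*k) = a (2*k) \<and> b (2*k+1) = a (2*k+1)"
          using PM[OF mono str strb H1 H2 kN] unfolding PMp_def by auto
        then show ?thesis using pt True unfolding swp_def k_def by auto
      next
        case False
        then have e: "eff N a k" unfolding eff_def using kN by simp
        show ?thesis
        proof (cases "swd a b k")
          case True
          then have "k \<in> blkP N a X" using inblk e by blast
          moreover have "b (2*k) = a (2*k+1) \<and> b (2*k+1) = a (2*k)"
            using PMs[OF mono str ne strb H1 H2 e True] .
          ultimately show ?thesis using pt unfolding swp_def k_def by auto
        next
          case False
          then have "k \<notin> blkP N a X" using blksw by blast
          moreover have "b (2*k) = a (2*k) \<and> b (2*k+1) = a (2*k+1)"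
            using PMn[OF mono str ne strb H1 H2 e False] .
          ultimately show ?thesis using ik unfolding swp_def k_def by auto
        qed
      qed
    qed
  qed
  then have "\<forall>i \<le> N. b i = aX N a X i" using aX_eq[OF mono str ne X] by simp
  then show ?thesis using X by blast
qed



theorem lemma2p2:
  fixes N :: nat and a :: "nat \<Rightarrow> nat"
  assumes mono: "\<forall>i < N. a i \<le> a (Suc i)"
    and str: "strict2 N a"
    and ne: "singles N a \<noteq> {}"
  shows "mu N a mod 2 = N mod 2
    \<and> (\<forall>s \<le> mu N a. idx N a s mod 2 = s mod 2)
    \<and> (\<forall>s < mu N a. \<exists>m::nat. idx N a (Suc s) = idx N a s + 2 * m + 1)
    \<and> (\<forall>X. X \<subseteq> {s. s < mu N a \<and> even s} \<longrightarrow> inE N a (aX N a X))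
    \<and> (\<forall>b. inE N a b \<and> mset_seq N (ring b) = mset_seq N (ring a) \<longrightarrow>
          (\<exists>X. X \<subseteq> {s. s < mu N a \<and> even s} \<and> (\<forall>i \<le> N. b i = aX N a X i)))"
  using mu_par[OF mono str ne] idx_par[OF mono str ne] idx_gap[OF mono str ne]
    part4[OF mono str ne] part5[OF mono str ne] by blast

end
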